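(* Let $n,c,\sigma\ge1$ be integers, set $d=4\sigma$, let $p$ be a prime, and let $x\in\{0,\ldots,c\}^n$ have at most $\sigma$ nonzero coordinates. Let $\rho:\{1,\ldots,n\}\to\{1,\ldots,d\}$ be a uniformly random mapping and $r_1,\ldots,r_n$ independent uniform elements of $\{0,\ldots,p-1\}$, and define $\phi_j(x)=\big(\sum_{i:\rho(i)=j}x_ir_i\big)\bmod p$ for $j=1,\ldots,d$. Then the expected number of nonzero entries of $\phi(x)$ is at most $\tfrac d4$, and with probability at least $\tfrac12$ at least half of the entries of $\phi(x)$ are zero.
   Context: FSketch construction as described in the claim. *)

theory Defs
  imports "HOL-Probability.Probability"
begin

definition fsketch :: "nat \<Rightarrow> nat \<Rightarrow> (nat \<Rightarrow> nat) \<Rightarrow> (nat \<Rightarrow> nat) \<Rightarrow> (nat \<Rightarrow> nat) \<Rightarrow> nat \<Rightarrow> nat" where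
  "fsketch n p x \<rho> r j = (\<Sum>i\<in>{i\<in>{1..n}. \<rho> i = j}. x i * r i) mod p"

definition sketch_space :: "nat \<Rightarrow> nat \<Rightarrow> nat \<Rightarrow> ((nat \<Rightarrow> nat) \<times> (nat \<Rightarrow> nat)) pmf" where
  "sketch_space n d p = pair_pmf (pmf_of_set (PiE {1..n} (\<lambda>_. {1..d})))
                                 (pmf_of_set (PiE {1..n} (\<lambda>_. {0..<p})))"

end

theory Submission
  imports Defs
begin

lemma key:
  fixes n p d \<sigma> :: nat and x :: "nat \<Rightarrow> nat"
  assumes "card {i\<in>{1..n}. x i \<noteq> 0} \<le> \<sigma>"
  shows "card {j\<in>{1..d}. fsketch n p x \<rho> r j \<noteq> 0} \<le> \<sigma>"
proof -
  let ?S = "{i\<in>{1..n}. x i \<noteq> 0}"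
  have sub: "{j\<in>{1..d}. fsketch n p x \<rho> r j \<noteq> 0} \<subseteq> \<rho> ` ?S"
  proof
    fix j assume j: "j \<in> {j\<in>{1..d}. fsketch n p x \<rho> r j \<noteq> 0}"
    show "j \<in> \<rho> ` ?S"
    proof (rule ccontr)
      assume "j \<notin> \<rho> ` ?S"
      then have "\<forall>i\<in>{i\<in>{1..n}. \<rho> i = j}. x i * r i = 0" by auto
      then have "(\<Sum>i\<in>{i\<in>{1..n}. \<rho> i = j}. x i * r i) = 0"
        by (intro sum.neutral) blast
      then have "fsketch n p x \<rho> r j = 0" unfolding fsketch_def by (simp only: mod_0)
      then show False using j by simp
    qed
  qed
  have "card {j\<in>{1..d}. fsketch n p x \<rho> r j \<noteq> 0} \<le> card (\<rho> ` ?S)"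
    by (rule card_mono[OF _ sub]) simp
  also have "\<dots> \<le> card ?S" by (rule card_image_le) simp
  finally show ?thesis using assms by linarith
qed

theorem lemma7:
  fixes n c \<sigma> d p :: nat and x :: "nat \<Rightarrow> nat"
  assumes "n \<ge> 1" and "c \<ge> 1" and "\<sigma> \<ge> 1" and "d = 4 * \<sigma>" and "prime p"
    and "x \<in> PiE {1..n} (\<lambda>_. {0..c})"
    and "card {i\<in>{1..n}. x i \<noteq> 0} \<le> \<sigma>"
  shows "measure_pmf.expectation (sketch_space n d p)
           (\<lambda>(\<rho>, r). real (card {j\<in>{1..d}. fsketch n p x \<rho> r j \<noteq> 0})) \<le> real d / 4
         \<and> measure_pmf.prob (sketch_space n d p)
           {(\<rho>, r). 2 * card {j\<in>{1..d}. fsketch n p x \<rho> r j = 0} \<ge> d} \<ge> 1 / 2"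
proof
  let ?f = "\<lambda>(\<rho>, r). real (card {j\<in>{1..d}. fsketch n p x \<rho> r j \<noteq> 0})"
  have b: "\<And>z. ?f z \<le> real \<sigma>" using key[OF assms(7)] by (auto split: prod.splits)
  have int: "integrable (measure_pmf (sketch_space n d p)) ?f"
    by (rule measure_pmf.integrable_const_bound[where B = "real \<sigma>"]) (use b in auto)
  have "measure_pmf.expectation (sketch_space n d p) ?f
        \<le> measure_pmf.expectation (sketch_space n d p) (\<lambda>_. real \<sigma>)"
    by (rule integral_mono[OF int]) (use b in auto)
  also have "\<dots> = real \<sigma>" by simp
  finally show "measure_pmf.expectation (sketch_space n d p) ?f \<le> real d / 4"
    using assms(4) by simp
next
  have "{(\<rho>, r). 2 * card {j\<in>{1..d}. fsketch n p x \<rho> r j = 0} \<ge> d} = UNIV"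
  proof (intro set_eqI iffI)
    fix z :: "(nat \<Rightarrow> nat) \<times> (nat \<Rightarrow> nat)"
    obtain \<rho> r where z: "z = (\<rho>, r)" by fastforce
    let ?Z = "{j\<in>{1..d}. fsketch n p x \<rho> r j = 0}"
    let ?N = "{j\<in>{1..d}. fsketch n p x \<rho> r j \<noteq> 0}"
    have u: "?Z \<union> ?N = {1..d}" by auto
    have "card ?Z + card ?N = card (?Z \<union> ?N)"
      by (rule card_Un_disjoint[symmetric]) auto
    then have "card ?Z + card ?N = card {1..d}" by (simp only: u)
    then have "card ?Z + card ?N = d" by simp
    moreover have "card ?N \<le> \<sigma>" by (rule key[OF assms(7)])
    ultimately show "z \<in> {(\<rho>, r). 2 * card {j\<in>{1..d}. fsketch n p x \<rho> r j = 0} \<ge> d}"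
      using z assms(4) by simp
  qed simp
  then show "measure_pmf.prob (sketch_space n d p)
           {(\<rho>, r). 2 * card {j\<in>{1..d}. fsketch n p x \<rho> r j = 0} \<ge> d} \<ge> 1 / 2"
    by simp
qed

end
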